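(* Let $(J,S)$ be a homogeneous $d$-dimensional multi-time Markov renewal chain with semi-Markov kernel $q$ and sojourn times $(X_n)$. Let $\phi:\mathbb{N}^d\to\mathbb{N}$ be a function, $\Phi_n:=\phi(X_n)$ and $S^{[\phi]}_n:=\sum_{k=0}^n\Phi_k$, $n\ge0$. Then $(J,S^{[\phi]})$ is a Markov renewal chain with interjump times $(\Phi_n)_{n\ge1}$, i.e. for all $n$, $j\in E$, $k\in\mathbb{N}$, a.s. $\mathbb{P}(J_{n+1}=j,S^{[\phi]}_{n+1}-S^{[\phi]}_n=k\mid J_{0:n},S^{[\phi]}_{0:n})=q^{[\phi]}_{J_nj}(k)$, with semi-Markov kernel $$q^{[\phi]}_{ij}(k)=\sum_{v\in\mathbb{N}^d:\ \phi(v)=k}q_{ij}(v),\qquad i,j\in E,\ k\in\mathbb{N}.$$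
   Context: $E=\{1,\dots,s\}$. $\mathbb{N}^d$ carries the partial order $k\le l$ iff $k_u\le l_u$ for all $u$, and $k<l$ iff $k\le l$, $k\ne l$. A homogeneous $d$-dimensional multi-time Markov renewal chain is a process $(J_n,S_n)_{n\in\mathbb{N}}$, $J_n\in E$, $S_n\in\mathbb{N}^d$, $S_0=0_d$, $S_n<S_{n+1}$, such that a.s. $\mathbb{P}(J_{n+1}=j,S_{n+1}-S_n=k\mid J_{0:n},S_{0:n})=q_{J_nj}(k)$ where $q_{ij}(k)=\mathbb{P}(J_{n+1}=j,S_{n+1}-S_n=k\mid J_n=i)$ does not depend on $n$ (the semi-Markov kernel). Sojourn times: $X_0=0_d$, $X_n=S_n-S_{n-1}$ for $n\ge1$. *)

theory Defs
  imports "HOL-Probability.Probability" "HOL-Library.Function_Algebras"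
begin

text \<open>Points of N^d are functions 'd => nat (with 'd a finite index type, d = CARD('d));
  the order on functions is pointwise, so k \<le> l and k < l are the partial orders of the paper.\<close>

definition hist_alg :: "'a measure \<Rightarrow> (nat \<Rightarrow> 'a \<Rightarrow> 'b) \<Rightarrow> (nat \<Rightarrow> 'a \<Rightarrow> 'c) \<Rightarrow> nat \<Rightarrow> 'a measure" where
  "hist_alg M Y T n = vimage_algebra (space M)
     (\<lambda>\<omega>. (map (\<lambda>i. Y i \<omega>) [0..<Suc n], map (\<lambda>i. T i \<omega>) [0..<Suc n])) (count_space UNIV)"

definition multi_time_MRC ::
  "'a measure \<Rightarrow> nat \<Rightarrow> (nat \<Rightarrow> nat \<Rightarrow> ('d::finite \<Rightarrow> nat) \<Rightarrow> real)
   \<Rightarrow> (nat \<Rightarrow> 'a \<Rightarrow> nat) \<Rightarrow> (nat \<Rightarrow> 'a \<Rightarrow> ('d \<Rightarrow> nat)) \<Rightarrow> bool" where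
  "multi_time_MRC M s q J S \<longleftrightarrow>
     prob_space M \<and>
     (\<forall>n. J n \<in> measurable M (count_space UNIV)) \<and>
     (\<forall>n. S n \<in> measurable M (count_space UNIV)) \<and>
     (\<forall>n. \<forall>\<omega>\<in>space M. J n \<omega> \<in> {1..s}) \<and>
     (\<forall>\<omega>\<in>space M. S 0 \<omega> = 0) \<and>
     (\<forall>n. \<forall>\<omega>\<in>space M. S n \<omega> < S (Suc n) \<omega>) \<and>
     (\<forall>n j k. j \<in> {1..s} \<longrightarrow>
        (AE \<omega> in M. real_cond_exp M (hist_alg M J S n)
            (indicator {\<omega>\<in>space M. J (Suc n) \<omega> = j \<and> S (Suc n) \<omega> - S n \<omega> = k}) \<omega>
          = q (J n \<omega>) j k))"

definition sojourn :: "(nat \<Rightarrow> 'a \<Rightarrow> ('d \<Rightarrow> nat)) \<Rightarrow> nat \<Rightarrow> 'a \<Rightarrow> ('d \<Rightarrow> nat)" where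
  "sojourn S n \<omega> = (if n = 0 then 0 else S n \<omega> - S (n - 1) \<omega>)"

definition phi_time :: "(('d \<Rightarrow> nat) \<Rightarrow> nat) \<Rightarrow> (nat \<Rightarrow> 'a \<Rightarrow> ('d \<Rightarrow> nat)) \<Rightarrow> nat \<Rightarrow> 'a \<Rightarrow> nat" where
  "phi_time \<phi> S n \<omega> = (\<Sum>k\<le>n. \<phi> (sojourn S k \<omega>))"

definition phi_kernel :: "(nat \<Rightarrow> nat \<Rightarrow> ('d \<Rightarrow> nat) \<Rightarrow> real) \<Rightarrow> (('d \<Rightarrow> nat) \<Rightarrow> nat) \<Rightarrow> nat \<Rightarrow> nat \<Rightarrow> nat \<Rightarrow> real" where
  "phi_kernel q \<phi> i j k = (\<Sum>\<^sub>\<infinity>v\<in>{v. \<phi> v = k}. q i j v)"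

end

theory Submission
  imports Defs "HOL-Library.Countable"
begin
lemma hist_subalg:
  fixes J :: "nat \<Rightarrow> 'a \<Rightarrow> 'b::countable" and T :: "nat \<Rightarrow> 'a \<Rightarrow> 'c::countable"
  assumes [measurable]: "\<And>i. J i \<in> measurable M (count_space UNIV)" "\<And>i. T i \<in> measurable M (count_space UNIV)"
  shows "subalgebra M (hist_alg M J T n)"
proof -
  define h where "h = (\<lambda>\<omega>. (map (\<lambda>i. J i \<omega>) [0..<Suc n], map (\<lambda>i. T i \<omega>) [0..<Suc n]))"
  have "h \<in> measurable M (count_space UNIV)"
    unfolding measurable_count_space_eq2_countable
  proof (intro conjI ballI)
    show "h \<in> space M \<rightarrow> UNIV" by simp
    fix a :: "'b list \<times> 'c list"
    obtain js ss where a: "a = (js, ss)" by (cases a)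
    have "h -` {a} \<inter> space M = {\<omega>\<in>space M. length js = Suc n \<and> length ss = Suc n \<and>
        (\<forall>i<Suc n. J i \<omega> = js!i) \<and> (\<forall>i<Suc n. T i \<omega> = ss!i)}"
      unfolding h_def a by (auto simp: list_eq_iff_nth_eq simp del: upt_Suc)
    also have "\<dots> \<in> sets M" by measurable
    finally show "h -` {a} \<inter> space M \<in> sets M" .
  qed
  then show ?thesis
    unfolding subalgebra_def hist_alg_def h_def[symmetric]
    by (auto simp: sets_vimage_algebra2 measurable_sets)
qed

lemma measure_has_sum_countable:
  fixes X :: "'i::countable \<Rightarrow> 'a set"
  assumes "finite_measure M" "\<And>i. X i \<in> sets M" "disjoint_family X"
  shows "((\<lambda>i. measure M (X i)) has_sum measure M (\<Union>i. X i)) UNIV"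
proof -
  interpret finite_measure M by fact
  define Y where "Y n = (if n \<in> range (to_nat :: 'i \<Rightarrow> nat) then X (from_nat n) else {})" for n
  have Y: "range Y \<subseteq> sets M" using assms(2) by (auto simp: Y_def)
  have dY: "disjoint_family Y"
    using assms(3) unfolding disjoint_family_on_def Y_def by (auto simp: from_nat_to_nat) blast
  have UY: "(\<Union>i. Y i) = (\<Union>i. X i)"
    unfolding Y_def by (auto split: if_splits simp: from_nat_to_nat)
  have "(\<lambda>n. measure M (Y n)) sums measure M (\<Union>i. Y i)"
    by (rule measure_UNION[OF Y dY]) simp
  then have "((\<lambda>n. measure M (Y n)) has_sum measure M (\<Union>i. X i)) UNIV"
    unfolding UY by (rule sums_nonneg_imp_has_sum) simp
  then have "((\<lambda>n. measure M (X (from_nat n))) has_sum measure M (\<Union>i. X i)) (range (to_nat :: 'i \<Rightarrow> nat))"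
    by (subst has_sum_cong_neutral[where T=UNIV and g="\<lambda>n. measure M (Y n)"]) (auto simp: Y_def)
  then have "(((\<lambda>n. measure M (X (from_nat n))) \<circ> (to_nat :: 'i \<Rightarrow> nat)) has_sum measure M (\<Union>i. X i)) UNIV"
    by (subst (asm) has_sum_reindex) auto
  then show ?thesis by (simp add: o_def)
qed

lemma pair_meas_count:
  fixes X :: "'a \<Rightarrow> 'b::countable" and Y :: "'a \<Rightarrow> 'c::countable"
  assumes "X \<in> measurable M (count_space UNIV)" "Y \<in> measurable M (count_space UNIV)"
  shows "(\<lambda>\<omega>. (X \<omega>, Y \<omega>)) \<in> measurable M (count_space UNIV)"
  unfolding measurable_count_space_eq2_countable
proof (intro conjI ballI)
  fix a :: "'b \<times> 'c"
  obtain x y where a: "a = (x, y)" by (cases a)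
  have "(\<lambda>\<omega>. (X \<omega>, Y \<omega>)) -` {a} \<inter> space M = (X -` {x} \<inter> space M) \<inter> (Y -` {y} \<inter> space M)"
    unfolding a by auto
  also have "\<dots> \<in> sets M" using assms by (intro sets.Int measurable_sets) auto
  finally show "(\<lambda>\<omega>. (X \<omega>, Y \<omega>)) -` {a} \<inter> space M \<in> sets M" .
qed simp

theorem proposition6:
  fixes M :: "'a measure" and s :: nat
    and q :: "nat \<Rightarrow> nat \<Rightarrow> ('d::finite \<Rightarrow> nat) \<Rightarrow> real"
    and J :: "nat \<Rightarrow> 'a \<Rightarrow> nat" and S :: "nat \<Rightarrow> 'a \<Rightarrow> ('d \<Rightarrow> nat)"
    and \<phi> :: "('d \<Rightarrow> nat) \<Rightarrow> nat"
  assumes "multi_time_MRC M s q J S"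
  shows "\<forall>n j k. j \<in> {1..s} \<longrightarrow>
           (AE \<omega> in M. real_cond_exp M (hist_alg M J (phi_time \<phi> S) n)
              (indicator {\<omega>\<in>space M. J (Suc n) \<omega> = j \<and>
                  phi_time \<phi> S (Suc n) \<omega> - phi_time \<phi> S n \<omega> = k}) \<omega>
            = phi_kernel q \<phi> (J n \<omega>) j k)"
proof (intro allI impI)
  fix n j k assume j: "j \<in> {1..s}"
  note mrc = assms[unfolded multi_time_MRC_def]
  interpret P: prob_space M using mrc by blast
  have Jm: "\<And>i. J i \<in> measurable M (count_space UNIV)" using mrc by blast
  have Sm: "\<And>i. S i \<in> measurable M (count_space UNIV)" using mrc by blast
  have Jr: "\<And>i \<omega>. \<omega> \<in> space M \<Longrightarrow> J i \<omega> \<in> {1..s}" using mrc by blast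
  define Av where "Av v = {\<omega>\<in>space M. J (Suc n) \<omega> = j \<and> S (Suc n) \<omega> - S n \<omega> = v}" for v
  define H where "H = hist_alg M J S n"
  have hyp: "\<And>v. AE \<omega> in M. real_cond_exp M H (indicator (Av v)) \<omega> = q (J n \<omega>) j v"
    using mrc j unfolding Av_def H_def by blast
  define P where "P = phi_time \<phi> S"
  define H' where "H' = hist_alg M J P n"
  define hS where "hS = (\<lambda>\<omega>. (map (\<lambda>i. J i \<omega>) [0..<Suc n], map (\<lambda>i. S i \<omega>) [0..<Suc n]))"
  define hP where "hP = (\<lambda>\<omega>. (map (\<lambda>i. J i \<omega>) [0..<Suc n], map (\<lambda>i. P i \<omega>) [0..<Suc n]))"
  define G where "G = (\<lambda>(js::nat list, ss::('d\<Rightarrow>nat) list). (js, map (\<lambda>i. \<Sum>m\<le>i. \<phi> (if m = 0 then 0 else ss!m - ss!(m-1))) [0..<Suc n]))"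
  have hPG: "hP \<omega> = G (hS \<omega>)" for \<omega>
    unfolding hP_def hS_def G_def P_def phi_time_def sojourn_def
    by (auto simp del: upt_Suc intro!: sum.cong)
  have subH: "subalgebra M H" unfolding H_def by (rule hist_subalg[OF Jm Sm])
  have setsH: "sets H = {hS -` A \<inter> space M | A. A \<in> sets (count_space UNIV)}"
    unfolding H_def hist_alg_def hS_def[symmetric] by (rule sets_vimage_algebra2) simp
  have setsH': "sets H' = {hP -` A \<inter> space M | A. A \<in> sets (count_space UNIV)}"
    unfolding H'_def hist_alg_def hP_def[symmetric] by (rule sets_vimage_algebra2) simp
  have H'H: "sets H' \<subseteq> sets H"
  proof
    fix B assume "B \<in> sets H'"
    then obtain C where "B = hP -` C \<inter> space M" using setsH' by auto
    then have "B = hS -` (G -` C) \<inter> space M" using hPG by auto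
    then show "B \<in> sets H" using setsH by auto
  qed
  have subH': "subalgebra M H'"
    using subH H'H unfolding subalgebra_def by (auto simp: H'_def H_def hist_alg_def)
  interpret H': finite_measure_subalgebra M H'
    by (intro finite_measure_subalgebra.intro finite_measure_subalgebra_axioms.intro subH') unfold_locales
  interpret HH: finite_measure_subalgebra M H
    by (intro finite_measure_subalgebra.intro finite_measure_subalgebra_axioms.intro subH) unfold_locales
  have JnH': "J n \<in> measurable H' (count_space UNIV)"
  proof -
    have "hP \<in> measurable H' (count_space UNIV)"
      unfolding H'_def hist_alg_def hP_def[symmetric] by (rule measurable_vimage_algebra1) simp
    then have "(\<lambda>p. fst p ! n) \<circ> hP \<in> measurable H' (count_space UNIV)"
      by (rule measurable_comp) simp
    moreover have "((\<lambda>p. fst p ! n) \<circ> hP) \<omega> = J n \<omega>" for \<omega>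
      unfolding hP_def by (simp del: upt_Suc)
    ultimately show ?thesis by (simp add: o_def)
  qed
  have Z: "(\<lambda>\<omega>. (J (Suc n) \<omega>, S (Suc n) \<omega>, S n \<omega>)) \<in> measurable M (count_space UNIV)"
    by (intro pair_meas_count Jm Sm)
  have Zset: "{\<omega>\<in>space M. R (J (Suc n) \<omega>, S (Suc n) \<omega>, S n \<omega>)} \<in> sets M" for R
  proof -
    have "{\<omega>\<in>space M. R (J (Suc n) \<omega>, S (Suc n) \<omega>, S n \<omega>)} =
      (\<lambda>\<omega>. (J (Suc n) \<omega>, S (Suc n) \<omega>, S n \<omega>)) -` {p. R p} \<inter> space M" by auto
    also have "\<dots> \<in> sets M" by (rule measurable_sets[OF Z]) simp
    finally show ?thesis .
  qed
  have Av_sets: "Av v \<in> sets M" for v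
    unfolding Av_def using Zset[of "\<lambda>(a,b,c). a = j \<and> b - c = v"] by simp
  define A where "A = {\<omega>\<in>space M. J (Suc n) \<omega> = j \<and> P (Suc n) \<omega> - P n \<omega> = k}"
  have A_eq: "A = {\<omega>\<in>space M. J (Suc n) \<omega> = j \<and> \<phi> (S (Suc n) \<omega> - S n \<omega>) = k}"
    unfolding A_def P_def phi_time_def sojourn_def by simp
  have A_sets: "A \<in> sets M"
    unfolding A_eq using Zset[of "\<lambda>(a,b,c). a = j \<and> \<phi> (b - c) = k"] by simp
  have key: "phi_kernel q \<phi> i j k * measure M Bi = measure M (Bi \<inter> A)"
    if Bi: "Bi \<in> sets H" "Bi \<subseteq> {\<omega>\<in>space M. J n \<omega> = i}" for Bi i
  proof -
    have BiM: "Bi \<in> sets M" using subH Bi unfolding subalgebra_def by blast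
    have mv: "measure M (Bi \<inter> Av v) = q i j v * measure M Bi" for v
    proof -
      have intA: "integrable M (indicator (Av v) :: 'a \<Rightarrow> real)"
        using Av_sets by (simp add: integrable_indicator_iff less_top[symmetric] P.emeasure_finite)
      have "measure M (Bi \<inter> Av v) = (\<integral>x\<in>Bi. indicator (Av v) x \<partial>M)"
        using BiM Av_sets unfolding set_lebesgue_integral_def
        by (simp add: indicator_inter_arith[symmetric] Int_absorb2 sets.sets_into_space sets.Int)
      also have "\<dots> = (\<integral>x\<in>Bi. real_cond_exp M H (indicator (Av v)) x \<partial>M)"
        by (rule HH.real_cond_exp_intA[OF intA Bi(1)])
      also have "\<dots> = (\<integral>x\<in>Bi. q i j v \<partial>M)"
      proof (rule set_lebesgue_integral_cong_AE)
        show "AE x\<in>Bi in M. real_cond_exp M H (indicator (Av v)) x = q i j v"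
          using hyp[of v] Bi(2) by (auto elim!: eventually_mono)
      qed (auto simp: BiM)
      also have "\<dots> = q i j v * measure M Bi"
        using BiM by (simp add: set_integral_const)
      finally show ?thesis .
    qed
    define X where "X v = (if \<phi> v = k then Bi \<inter> Av v else {})" for v
    have UX: "(\<Union>v. X v) = Bi \<inter> A"
      unfolding X_def A_eq Av_def by (auto split: if_splits)
    have dX: "disjoint_family X"
      unfolding disjoint_family_on_def X_def Av_def by auto
    have "((\<lambda>v. measure M (X v)) has_sum measure M (Bi \<inter> A)) UNIV"
      using measure_has_sum_countable[of M X] UX dX BiM Av_sets
      by (auto simp: X_def P.finite_measure_axioms)
    then have hs: "((\<lambda>v. q i j v * measure M Bi) has_sum measure M (Bi \<inter> A)) {v. \<phi> v = k}"
      by (subst (asm) has_sum_cong_neutral[where T="{v. \<phi> v = k}" and g="\<lambda>v. q i j v * measure M Bi"])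
         (auto simp: X_def mv)
    show ?thesis
    proof (cases "measure M Bi = 0")
      case True
      have "measure M (Bi \<inter> A) \<le> measure M Bi"
        using BiM A_sets by (intro P.finite_measure_mono) auto
      with True show ?thesis by (simp add: measure_nonneg antisym)
    next
      case False
      have "((\<lambda>v. (1 / measure M Bi) * (q i j v * measure M Bi)) has_sum
             ((1 / measure M Bi) * measure M (Bi \<inter> A))) {v. \<phi> v = k}"
        by (rule has_sum_cmult_right[OF hs])
      then have "((\<lambda>v. q i j v) has_sum (measure M (Bi \<inter> A) / measure M Bi)) {v. \<phi> v = k}"
        using False by simp
      then have "phi_kernel q \<phi> i j k = measure M (Bi \<inter> A) / measure M Bi"
        unfolding phi_kernel_def by (rule infsumI)
      then show ?thesis using False by simp
    qed
  qed
  define g where "g = (\<lambda>\<omega>. phi_kernel q \<phi> (J n \<omega>) j k)"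
  have gH': "g \<in> borel_measurable H'"
  proof -
    have "(\<lambda>i. phi_kernel q \<phi> i j k) \<circ> J n \<in> borel_measurable H'"
      by (rule measurable_comp[OF JnH']) simp
    then show ?thesis by (simp add: g_def o_def)
  qed
  have gM: "g \<in> borel_measurable M" by (rule measurable_from_subalg[OF subH' gH'])
  have gint: "integrable M g"
  proof (rule P.integrable_const_bound[where B="\<Sum>i\<in>{1..s}. \<bar>phi_kernel q \<phi> i j k\<bar>"])
    show "AE x in M. norm (g x) \<le> (\<Sum>i\<in>{1..s}. \<bar>phi_kernel q \<phi> i j k\<bar>)"
    proof (rule AE_I2)
      fix x assume "x \<in> space M"
      then have "J n x \<in> {1..s}" by (rule Jr)
      then show "norm (g x) \<le> (\<Sum>i\<in>{1..s}. \<bar>phi_kernel q \<phi> i j k\<bar>)"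
        unfolding g_def real_norm_def
        by (rule member_le_sum[where f="\<lambda>i. \<bar>phi_kernel q \<phi> i j k\<bar>"]) auto
    qed
  qed (rule gM)
  have intA: "integrable M (indicator A :: 'a \<Rightarrow> real)"
    using A_sets by (simp add: integrable_indicator_iff less_top[symmetric] P.emeasure_finite)
  have "AE \<omega> in M. real_cond_exp M H' (indicator A) \<omega> = g \<omega>"
  proof (rule H'.real_cond_exp_charact[OF _ intA gint gH'])
    fix B assume BH': "B \<in> sets H'"
    have BM: "B \<in> sets M" using subH' BH' unfolding subalgebra_def by blast
    define Bi where "Bi i = B \<inter> {\<omega>\<in>space M. J n \<omega> = i}" for i
    have JiH': "{\<omega>\<in>space M. J n \<omega> = i} \<in> sets H'" for i
    proof -
      have "J n -` {i} \<inter> space H' \<in> sets H'" using JnH' by (rule measurable_sets) simp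
      moreover have "space H' = space M" using subH' unfolding subalgebra_def by simp
      ultimately show ?thesis by (simp add: vimage_def Int_def conj_commute)
    qed
    have BiH: "Bi i \<in> sets H" for i
      using H'H BH' JiH' unfolding Bi_def by blast
    have BiM: "Bi i \<in> sets M" for i
      using subH BiH unfolding subalgebra_def by blast
    have eq1: "indicator B x * indicator A x = (\<Sum>i\<in>{1..s}. indicator (Bi i \<inter> A) x :: real)"
      if x: "x \<in> space M" for x
    proof -
      have "(\<Sum>i\<in>{1..s}. indicator (Bi i \<inter> A) x :: real) =
            (\<Sum>i\<in>{1..s}. if i = J n x then indicator (B \<inter> A) x else 0)"
        using x by (intro sum.cong) (auto simp: Bi_def indicator_def)
      also have "\<dots> = indicator (B \<inter> A) x" using Jr[OF x] by simp
      finally show ?thesis by (simp add: indicator_inter_arith)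
    qed
    have "(\<integral>x\<in>B. indicator A x \<partial>M) = (\<integral>x. (\<Sum>i\<in>{1..s}. indicator (Bi i \<inter> A) x :: real) \<partial>M)"
      unfolding set_lebesgue_integral_def
      by (rule Bochner_Integration.integral_cong) (simp_all add: eq1)
    also have "\<dots> = (\<Sum>i\<in>{1..s}. measure M (Bi i \<inter> A))"
      using BiM A_sets
      by (subst Bochner_Integration.integral_sum)
         (auto simp: integrable_indicator_iff less_top[symmetric] P.emeasure_finite sets.Int Int_absorb2 sets.sets_into_space)
    also have "\<dots> = (\<Sum>i\<in>{1..s}. phi_kernel q \<phi> i j k * measure M (Bi i))"
      by (intro sum.cong refl key[symmetric] BiH) (auto simp: Bi_def)
    also have "\<dots> = (\<integral>x. (\<Sum>i\<in>{1..s}. phi_kernel q \<phi> i j k * indicator (Bi i) x) \<partial>M)"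
      using BiM
      by (subst Bochner_Integration.integral_sum)
         (auto simp: integrable_indicator_iff less_top[symmetric] P.emeasure_finite Int_absorb2 sets.sets_into_space)
    also have "\<dots> = (\<integral>x\<in>B. g x \<partial>M)"
    proof -
      have eq2: "(\<Sum>i\<in>{1..s}. phi_kernel q \<phi> i j k * indicator (Bi i) x :: real) = indicator B x *\<^sub>R g x"
        if x: "x \<in> space M" for x
      proof -
        have "(\<Sum>i\<in>{1..s}. phi_kernel q \<phi> i j k * indicator (Bi i) x :: real) =
              (\<Sum>i\<in>{1..s}. if i = J n x then indicator B x * g x else 0)"
          using x by (intro sum.cong) (auto simp: Bi_def indicator_def g_def)
        also have "\<dots> = indicator B x * g x" using Jr[OF x] by simp
        finally show ?thesis by simp
      qed
      show ?thesis
        unfolding set_lebesgue_integral_def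
        by (rule Bochner_Integration.integral_cong[OF refl eq2])
    qed
    finally show "(\<integral>x\<in>B. indicator A x \<partial>M) = (\<integral>x\<in>B. g x \<partial>M)" .
  qed
  then show "AE \<omega> in M. real_cond_exp M H' (indicator A) \<omega> = phi_kernel q \<phi> (J n \<omega>) j k"
    by (simp add: g_def)
qed
end
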